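(* For every $\delta>0$ and $n\in\mathbb{N}$ there exists $N\in\mathbb{N}$ such that the following holds for every $N$-partitioned hypergraph $H$ and every choice of subsets $W_{jij'kj''}\subseteq V_{ik}$, for all $j,i,j',k,j''\in[N]$ with $j<i<j'<k<j''$, satisfying $|W_{jij'kj''}|\ge\delta|V_{ik}|$: there exist an induced $n$-partitioned subhypergraph $H'$ of $H$ with index set $I\subseteq[N]$ and vertices $w_{ik}\in V_{ik}$, for $i<k$, $i,k\in I$, such that $w_{ik}\in W_{jij'kj''}$ for all $j,j',j''\in I$ with $j<i<j'<k<j''$.
   Context: An $n$-partitioned hypergraph $H$ is a finite $3$-uniform hypergraph whose vertex set is partitioned into nonempty sets $V_{ij}$, $1\le i<j\le n$, such that every edge has, for some $1\le i<j<k\le n$, exactly one vertex in each of $V_{ij}$, $V_{ik}$, $V_{jk}$. For $I\subseteq[n]$, the induced subhypergraph with index set $I$ is the $|I|$-partitioned hypergraph with parts $V_{ij}$, $i<j$, $i,j\in I$ (indexed by elements of $I$) and all edges of $H$ contained in the union of these parts. *)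

theory Defs
  imports Complex_Main
begin

text \<open>An N-partitioned hypergraph: parts V i j (1 <= i < j <= N), edges E (3-element vertex sets).
  Vertices are taken from the fixed type nat (every finite hypergraph is isomorphic to one on nat).\<close>

definition partitioned_hypergraph ::
  "nat \<Rightarrow> (nat \<Rightarrow> nat \<Rightarrow> nat set) \<Rightarrow> nat set set \<Rightarrow> bool" where
  "partitioned_hypergraph N V E \<longleftrightarrow>
     (\<forall>i j. 1 \<le> i \<and> i < j \<and> j \<le> N \<longrightarrow> finite (V i j) \<and> V i j \<noteq> {}) \<and>
     (\<forall>i j i' j'. 1 \<le> i \<and> i < j \<and> j \<le> N \<and> 1 \<le> i' \<and> i' < j' \<and> j' \<le> N
        \<and> (i, j) \<noteq> (i', j') \<longrightarrow> V i j \<inter> V i' j' = {}) \<and>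
     (\<forall>e\<in>E. \<exists>i j k a b c. 1 \<le> i \<and> i < j \<and> j < k \<and> k \<le> N \<and>
        a \<in> V i j \<and> b \<in> V i k \<and> c \<in> V j k \<and> e = {a, b, c})"

definition induced_parts :: "(nat \<Rightarrow> nat \<Rightarrow> nat set) \<Rightarrow> nat set \<Rightarrow> nat set" where
  "induced_parts V I = (\<Union>i\<in>I. \<Union>j\<in>I. if i < j then V i j else {})"

definition induced_edges ::
  "(nat \<Rightarrow> nat \<Rightarrow> nat set) \<Rightarrow> nat set set \<Rightarrow> nat set \<Rightarrow> nat set set" where
  "induced_edges V E I = {e \<in> E. e \<subseteq> induced_parts V I}"

end

theory Submission imports Defs "HOL-Library.Ramsey" begin

lemma step_lemma:
  fixes X :: "'a set" and R :: "'b set" and T :: "('a \<times> 'b) set" and \<delta> :: real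
  assumes finX: "finite X" and finR: "finite R" and TX: "T \<subseteq> X \<times> R"
   and dens: "\<delta> * real (card X) * real (card R) \<le> real (card T)"
   and d0: "0 < \<delta>" and d1: "\<delta> \<le> 1" and pm: "2 * real p \<le> \<delta> * real (card X)"
  shows "\<exists>A\<subseteq>X. card A = p \<and> (\<exists>R'\<subseteq>R. \<delta> / 2^(card X + 1) * real (card R) \<le> real (card R') \<and> A \<times> R' \<subseteq> T)"
proof -
  define m where "m = card X"
  define fib where "fib s = {x\<in>X. (x,s)\<in>T}" for s
  have "\<delta> * real m \<le> real m" by (rule mult_left_le_one_le) (use d0 d1 in auto)
  then have "real p \<le> real m" using pm d0 unfolding m_def by linarith
  then have pm': "p \<le> m" by simp
  have Teq: "T = (\<Union>s\<in>R. (\<lambda>x. (x,s)) ` fib s)" using TX unfolding fib_def by auto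
  have cardT: "card T = (\<Sum>s\<in>R. card (fib s))"
  proof -
    have "card T = (\<Sum>s\<in>R. card ((\<lambda>x. (x,s)) ` fib s))"
      unfolding Teq
      by (rule card_UN_disjoint) (auto simp: finR fib_def finX)
    also have "\<dots> = (\<Sum>s\<in>R. card (fib s))"
      by (intro sum.cong refl card_image) (auto simp: inj_on_def)
    finally show ?thesis .
  qed
  have fibX: "fib s \<subseteq> X" for s unfolding fib_def by auto
  have fibm: "card (fib s) \<le> m" for s unfolding m_def by (rule card_mono[OF finX fibX])
  define R1 where "R1 = {s\<in>R. \<delta>*m/2 \<le> real (card (fib s))}"
  have R1R: "R1 \<subseteq> R" unfolding R1_def by auto
  have finR1: "finite R1" using R1R finR finite_subset by blast
  have low: "\<delta>*m*card R \<le> (\<Sum>s\<in>R. real (card (fib s)))"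
    using dens cardT unfolding m_def by (metis of_nat_sum)
  have "(\<Sum>s\<in>R. real (card (fib s))) = (\<Sum>s\<in>R1. real (card (fib s))) + (\<Sum>s\<in>R-R1. real (card (fib s)))"
    using sum.subset_diff[OF R1R finR, of "\<lambda>s. real (card (fib s))"] by linarith
  also have "(\<Sum>s\<in>R1. real (card (fib s))) \<le> (\<Sum>s\<in>R1. real m)"
    by (intro sum_mono) (simp add: fibm)
  also have "(\<Sum>s\<in>R-R1. real (card (fib s))) \<le> (\<Sum>s\<in>R-R1. \<delta>*m/2)"
    by (intro sum_mono) (auto simp: R1_def)
  also have "(\<Sum>s\<in>R-R1. \<delta>*m/2) \<le> (\<Sum>s\<in>R. \<delta>*m/2)"
    using d0 by (intro sum_mono2) (auto simp: finR)
  finally have up: "(\<Sum>s\<in>R. real (card (fib s))) \<le> real (card R1) * m + real (card R) * (\<delta>*m/2)"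
    by (simp add: mult.commute)
  show ?thesis
  proof (cases "m = 0")
    case True
    then have "p = 0" using pm' by simp
    moreover have "\<delta> / 2^(card X + 1) * real (card R) \<le> real (card R)"
    proof -
      have "\<delta> * real (card R) \<le> real (card R)" by (rule mult_left_le_one_le) (use d0 d1 in auto)
      then show ?thesis using True unfolding m_def by (simp; linarith)
    qed
    ultimately show ?thesis by (intro exI[of _ "{}"]) (auto intro!: exI[of _ R])
  next
    case False
    then have mpos: "real m > 0" by simp
    have "\<delta>*m*card R \<le> real (card R1) * m + real (card R) * (\<delta>*m/2)" using low up by linarith
    then have "(\<delta>*card R/2) * m \<le> real (card R1) * m" by (simp add: algebra_simps)
    then have R1big: "\<delta>*card R/2 \<le> real (card R1)" using mpos by simp
    define cls where "cls F = {s\<in>R1. fib s = F}" for F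
    have "R1 = (\<Union>F\<in>Pow X. cls F)" unfolding cls_def using fibX by auto
    then have "card R1 \<le> (\<Sum>F\<in>Pow X. card (cls F))"
      by (metis card_UN_le finX finite_Pow_iff)
    have "\<exists>F\<in>Pow X. real (card R1) \<le> real (card (cls F)) * 2^m"
    proof (rule ccontr)
      assume neg: "\<not> ?thesis"
      have "real (card (cls F)) < real (card R1) / 2^m" if "F \<in> Pow X" for F
      proof -
        have "\<not> real (card R1) \<le> real (card (cls F)) * 2^m" using neg that by blast
        then have "real (card (cls F)) * 2^m < real (card R1)" by simp
        then show ?thesis by (simp add: pos_less_divide_eq)
      qed
      then have "\<forall>F\<in>Pow X. real (card (cls F)) < real (card R1) / 2^m" by blast
      then have "(\<Sum>F\<in>Pow X. real (card (cls F))) < (\<Sum>F\<in>Pow X. real (card R1) / 2^m)"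
        by (intro sum_strict_mono) (auto simp: finX)
      also have "\<dots> = real (card R1)" using finX by (simp add: card_Pow m_def)
      finally show False using \<open>card R1 \<le> (\<Sum>F\<in>Pow X. card (cls F))\<close>
        by (metis not_less of_nat_le_iff of_nat_sum)
    qed
    then obtain F where FX: "F \<in> Pow X" and Fbig: "real (card R1) \<le> real (card (cls F)) * 2^m" by blast
    have bound: "\<delta> / 2^(card X + 1) * real (card R) \<le> real (card (cls F))"
    proof -
      have "\<delta> / 2^(card X + 1) * real (card R) = (\<delta>*card R/2) / 2^m" by (simp add: m_def)
      also have "\<dots> \<le> real (card R1) / 2^m" by (rule divide_right_mono[OF R1big]) simp
      also have "\<dots> \<le> real (card (cls F))" using Fbig by (simp add: field_simps)
      finally show ?thesis .
    qed
    have clsR: "cls F \<subseteq> R" using R1R unfolding cls_def by auto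
    show ?thesis
    proof (cases "cls F = {}")
      case True
      obtain A where "A \<subseteq> X" "card A = p" using pm' obtain_subset_with_card_n unfolding m_def by metis
      then show ?thesis using True bound by (intro exI[of _ A]) (auto intro!: exI[of _ "{}"])
    next
      case False
      then obtain s0 where s0: "s0 \<in> R1" "fib s0 = F" unfolding cls_def by auto
      then have "\<delta>*m/2 \<le> real (card F)" unfolding R1_def by auto
      then have "p \<le> card F" using pm unfolding m_def by linarith
      then obtain A where AF: "A \<subseteq> F" "card A = p" using obtain_subset_with_card_n by metis
      have "A \<times> cls F \<subseteq> T"
        using AF unfolding cls_def fib_def by auto
      then show ?thesis using AF FX bound clsR by (intro exI[of _ A]) auto
    qed
  qed
qed


lemma box_lemma:
  fixes V0 :: "'c set" and f :: "nat \<Rightarrow> nat \<Rightarrow> nat \<Rightarrow> 'c set" and \<delta> :: real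
  assumes finV: "finite V0" and neV: "V0 \<noteq> {}" and finX: "finite X" and finY: "finite Y" and finZ: "finite Z"
   and hyp: "\<forall>x\<in>X. \<forall>y\<in>Y. \<forall>z\<in>Z. f x y z \<subseteq> V0 \<and> \<delta> * real (card V0) \<le> real (card (f x y z))"
   and d0: "0 < \<delta>" and d1: "\<delta> \<le> 1"
   and c1: "2 * real p \<le> \<delta> * real (card X)"
   and c2: "2 * real q \<le> \<delta> / 2^(card X + 1) * real (card Y)"
   and c3: "real r \<le> \<delta> / 2^(card X + 1) / 2^(card Y + 1) * real (card Z)"
  shows "\<exists>w\<in>V0. \<exists>A\<subseteq>X. \<exists>B\<subseteq>Y. \<exists>C\<subseteq>Z. card A = p \<and> card B = q \<and> card C = r \<and>
           (\<forall>x\<in>A. \<forall>y\<in>B. \<forall>z\<in>C. w \<in> f x y z)"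
proof -
  define U where "U = X \<times> (Y \<times> Z)"
  define g where "g t = f (fst t) (fst (snd t)) (snd (snd t))" for t
  define Tw where "Tw w = {t\<in>U. w \<in> g t}" for w
  have finU: "finite U" unfolding U_def using finX finY finZ by simp
  have gsub: "g t \<subseteq> V0" if tU: "t \<in> U" for t
  proof -
    obtain x y z where "t = (x,y,z)" "x\<in>X" "y\<in>Y" "z\<in>Z" using tU unfolding U_def by auto
    then show ?thesis using hyp unfolding g_def by simp
  qed
  have gbig: "\<delta> * real (card V0) \<le> real (card (g t))" if tU: "t \<in> U" for t
  proof -
    obtain x y z where "t = (x,y,z)" "x\<in>X" "y\<in>Y" "z\<in>Z" using tU unfolding U_def by auto
    then show ?thesis using hyp unfolding g_def by simp
  qed
  have dc: "(\<Sum>w\<in>V0. card (Tw w)) = (\<Sum>t\<in>U. card (g t))"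
  proof -
    have "(\<Sum>w\<in>V0. card (Tw w)) = (\<Sum>w\<in>V0. \<Sum>t\<in>U. if w \<in> g t then 1 else 0)"
      unfolding Tw_def by (intro sum.cong refl) (simp add: sum.inter_filter[OF finU, symmetric])
    also have "\<dots> = (\<Sum>t\<in>U. \<Sum>w\<in>V0. if w \<in> g t then 1 else 0)" by (rule sum.swap)
    also have "\<dots> = (\<Sum>t\<in>U. card {w\<in>V0. w \<in> g t})"
      by (intro sum.cong refl) (simp add: sum.inter_filter[OF finV, symmetric])
    also have "\<dots> = (\<Sum>t\<in>U. card (g t))"
      by (intro sum.cong refl arg_cong[where f=card]) (use gsub in auto)
    finally show ?thesis .
  qed
  have "\<exists>w\<in>V0. \<delta> * real (card U) \<le> real (card (Tw w))"
  proof (rule ccontr)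
    assume "\<not> ?thesis"
    then have "\<forall>w\<in>V0. real (card (Tw w)) < \<delta> * real (card U)" by auto
    then have "(\<Sum>w\<in>V0. real (card (Tw w))) < (\<Sum>w\<in>V0. \<delta> * real (card U))"
      by (intro sum_strict_mono finV neV) auto
    also have "\<dots> = (\<Sum>t\<in>U. \<delta> * real (card V0))" by (simp add: mult.commute)
    also have "\<dots> \<le> (\<Sum>t\<in>U. real (card (g t)))"
      by (intro sum_mono gbig)
    finally show False using dc by (metis less_irrefl of_nat_sum)
  qed
  then obtain w where wV: "w \<in> V0" and wd: "\<delta> * real (card U) \<le> real (card (Tw w))" by blast
  have "\<exists>A\<subseteq>X. card A = p \<and> (\<exists>R'\<subseteq>Y \<times> Z. \<delta> / 2^(card X + 1) * real (card (Y \<times> Z)) \<le> real (card R') \<and> A \<times> R' \<subseteq> Tw w)"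
  proof (rule step_lemma[OF finX _ _ _ d0 d1 c1])
    show "finite (Y \<times> Z)" using finY finZ by simp
    show "Tw w \<subseteq> X \<times> (Y \<times> Z)" unfolding Tw_def U_def by blast
    have "card U = card X * (card Y * card Z)" unfolding U_def by (simp add: card_cartesian_product)
    then show "\<delta> * real (card X) * real (card (Y \<times> Z)) \<le> real (card (Tw w))"
      using wd by (simp add: card_cartesian_product mult.assoc)
  qed
  then obtain A R' where AX: "A \<subseteq> X" "card A = p" and R': "R' \<subseteq> Y \<times> Z"
    "\<delta> / 2^(card X + 1) * real (card (Y \<times> Z)) \<le> real (card R')" "A \<times> R' \<subseteq> Tw w" by blast
  define \<delta>1 where "\<delta>1 = \<delta> / 2^(card X + 1)"
  have p1: "(1::real) \<le> 2^(card X + 1)" by (rule one_le_power) simp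
  have "\<delta> * 1 \<le> \<delta> * 2^(card X + 1)" using d0 p1 by (intro mult_left_mono) auto
  then have hle: "\<delta> / 2^(card X + 1) \<le> \<delta>" by (simp add: pos_divide_le_eq)
  have d10a: "0 < \<delta>1" unfolding \<delta>1_def using d0 by simp
  have d10b: "\<delta>1 \<le> 1" unfolding \<delta>1_def using hle d1 by (rule order_trans)
  note d10 = d10a d10b
  have "\<exists>B\<subseteq>Y. card B = q \<and> (\<exists>Z'\<subseteq>Z. \<delta>1 / 2^(card Y + 1) * real (card Z) \<le> real (card Z') \<and> B \<times> Z' \<subseteq> R')"
  proof (rule step_lemma[OF finY finZ R'(1) _ d10])
    show "\<delta>1 * real (card Y) * real (card Z) \<le> real (card R')"
      using R'(2) by (simp add: \<delta>1_def card_cartesian_product mult.assoc)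
    show "2 * real q \<le> \<delta>1 * real (card Y)" using c2 by (simp add: \<delta>1_def)
  qed
  then obtain B Z' where BY: "B \<subseteq> Y" "card B = q" and Z': "Z' \<subseteq> Z"
    "\<delta>1 / 2^(card Y + 1) * real (card Z) \<le> real (card Z')" "B \<times> Z' \<subseteq> R'" by blast
  have "r \<le> card Z'" using Z'(2) c3 unfolding \<delta>1_def by linarith
  then obtain C where CZ: "C \<subseteq> Z'" "card C = r" using obtain_subset_with_card_n by metis
  have "\<forall>x\<in>A. \<forall>y\<in>B. \<forall>z\<in>C. w \<in> f x y z"
  proof (intro ballI)
    fix x y z assume "x \<in> A" "y \<in> B" "z \<in> C"
    then have "(y,z) \<in> R'" using Z'(3) CZ by auto
    then have "(x,(y,z)) \<in> Tw w" using R'(3) \<open>x \<in> A\<close> by auto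
    then show "w \<in> f x y z" unfolding Tw_def g_def by auto
  qed
  then show ?thesis using wV AX BY CZ Z'(1) by (intro bexI[of _ w] exI[of _ A] exI[of _ B] exI[of _ C] conjI) auto
qed


definition okd :: "real \<Rightarrow> (nat \<Rightarrow> nat \<Rightarrow> nat set) \<Rightarrow> (nat \<Rightarrow> nat \<Rightarrow> nat \<Rightarrow> nat \<Rightarrow> nat \<Rightarrow> nat set) \<Rightarrow> nat set \<Rightarrow> bool" where
  "okd \<delta> V W Y \<longleftrightarrow> (\<forall>i\<in>Y. \<forall>k\<in>Y. i < k \<longrightarrow> finite (V i k) \<and> V i k \<noteq> {}) \<and>
     (\<forall>j\<in>Y. \<forall>i\<in>Y. \<forall>j'\<in>Y. \<forall>k\<in>Y. \<forall>j''\<in>Y. j < i \<and> i < j' \<and> j' < k \<and> k < j'' \<longrightarrow>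
        W j i j' k j'' \<subseteq> V i k \<and> \<delta> * real (card (V i k)) \<le> real (card (W j i j' k j'')))"

definition goodp :: "nat \<Rightarrow> nat \<Rightarrow> (nat \<Rightarrow> nat \<Rightarrow> nat set) \<Rightarrow> (nat \<Rightarrow> nat \<Rightarrow> nat \<Rightarrow> nat \<Rightarrow> nat \<Rightarrow> nat set) \<Rightarrow> nat set \<Rightarrow> bool" where
  "goodp a b V W S \<longleftrightarrow> (\<forall>i\<in>S. \<forall>k\<in>S. i < k \<and> card {x\<in>S. x < i} = a \<and> card {x\<in>S. x < k} = b \<longrightarrow>
     (\<exists>w\<in>V i k. \<forall>j\<in>S. \<forall>j'\<in>S. \<forall>j''\<in>S. j < i \<and> i < j' \<and> j' < k \<and> k < j'' \<longrightarrow> w \<in> W j i j' k j''))"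

lemma okdV: "okd \<delta> V W Y \<Longrightarrow> i \<in> Y \<Longrightarrow> k \<in> Y \<Longrightarrow> i < k \<Longrightarrow> finite (V i k) \<and> V i k \<noteq> {}"
  unfolding okd_def by simp

lemma okdD: "okd \<delta> V W Y \<Longrightarrow> j \<in> Y \<Longrightarrow> i \<in> Y \<Longrightarrow> j' \<in> Y \<Longrightarrow> k \<in> Y \<Longrightarrow> j'' \<in> Y \<Longrightarrow>
   j < i \<Longrightarrow> i < j' \<Longrightarrow> j' < k \<Longrightarrow> k < j'' \<Longrightarrow>
   W j i j' k j'' \<subseteq> V i k \<and> \<delta> * real (card (V i k)) \<le> real (card (W j i j' k j''))"
  unfolding okd_def by simp

lemma okd_mono:
  assumes sub: "Y' \<subseteq> Y" and ok: "okd \<delta> V W Y"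
  shows "okd \<delta> V W Y'"
proof -
  have A: "\<forall>i\<in>Y'. \<forall>k\<in>Y'. i < k \<longrightarrow> finite (V i k) \<and> V i k \<noteq> {}"
  proof (intro ballI impI)
    fix i k assume "i \<in> Y'" "k \<in> Y'" "i < k"
    then show "finite (V i k) \<and> V i k \<noteq> {}" using okdV[OF ok] sub by blast
  qed
  have B: "\<forall>j\<in>Y'. \<forall>i\<in>Y'. \<forall>j'\<in>Y'. \<forall>k\<in>Y'. \<forall>j''\<in>Y'. j < i \<and> i < j' \<and> j' < k \<and> k < j'' \<longrightarrow>
        W j i j' k j'' \<subseteq> V i k \<and> \<delta> * real (card (V i k)) \<le> real (card (W j i j' k j''))"
  proof (intro ballI impI)
    fix j i j' k j'' assume m: "j \<in> Y'" "i \<in> Y'" "j' \<in> Y'" "k \<in> Y'" "j'' \<in> Y'"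
      and o: "j < i \<and> i < j' \<and> j' < k \<and> k < j''"
    have "j \<in> Y" "i \<in> Y" "j' \<in> Y" "k \<in> Y" "j'' \<in> Y" using m sub by auto
    then show "W j i j' k j'' \<subseteq> V i k \<and> \<delta> * real (card (V i k)) \<le> real (card (W j i j' k j''))"
      using okdD[OF ok] o by blast
  qed
  show ?thesis unfolding okd_def using A B by blast
qed

lemma split_lemma:
  fixes H :: "nat set"
  assumes "finite H" "a + 1 + b \<le> card H"
  shows "\<exists>X x R. X \<subseteq> H \<and> x \<in> H \<and> R \<subseteq> H \<and> card X = a \<and> card R = b \<and> (\<forall>y\<in>X. y < x) \<and> (\<forall>y\<in>R. x < y)"
  using assms
proof (induction a arbitrary: H)
  case 0
  then have ne: "H \<noteq> {}" by auto
  define x where "x = Min H"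
  have xH: "x \<in> H" using 0(1) ne unfolding x_def by (rule Min_in)
  have bnd: "b \<le> card (H - {x})" using 0 xH by simp
  obtain R where R: "R \<subseteq> H - {x}" "card R = b" "finite R" by (rule obtain_subset_with_card_n[OF bnd])
  have Rx: "\<forall>y\<in>R. x < y"
  proof
    fix y assume "y \<in> R"
    then have "y \<in> H" "y \<noteq> x" using R(1) by auto
    then have "x \<le> y" "y \<noteq> x" unfolding x_def using 0(1) by auto
    then show "x < y" by simp
  qed
  have RH: "R \<subseteq> H" using R(1) by auto
  show ?case
    by (intro exI[of _ "{}"] exI[of _ x] exI[of _ R] conjI) (use xH RH R(2) Rx in auto)
next
  case (Suc a)
  have ne: "H \<noteq> {}" using Suc.prems by auto
  define x0 where "x0 = Min H"
  have x0H: "x0 \<in> H" using Suc.prems(1) ne unfolding x0_def by (rule Min_in)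
  have bnd: "a + 1 + b \<le> card (H - {x0})" using Suc.prems x0H by simp
  have fin': "finite (H - {x0})" using Suc.prems(1) by simp
  have "\<exists>X x R. X \<subseteq> H - {x0} \<and> x \<in> H - {x0} \<and> R \<subseteq> H - {x0} \<and> card X = a \<and> card R = b \<and> (\<forall>y\<in>X. y < x) \<and> (\<forall>y\<in>R. x < y)"
    by (rule Suc.IH[OF fin' bnd])
  then obtain X x R where IH: "X \<subseteq> H - {x0}" "x \<in> H - {x0}" "R \<subseteq> H - {x0}" "card X = a" "card R = b"
    "\<forall>y\<in>X. y < x" "\<forall>y\<in>R. x < y"
    by (elim exE conjE) (rule that, assumption+)
  have "x \<in> H" "x \<noteq> x0" using IH(2) by auto
  then have "x0 \<le> x" "x \<noteq> x0" unfolding x0_def using Suc.prems(1) by auto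
  then have x0x: "x0 < x" by simp
  have finX: "finite X" using IH(1) fin' finite_subset by blast
  have x0X: "x0 \<notin> X" using IH(1) by auto
  have cX: "card (insert x0 X) = Suc a" using card_insert_disjoint[OF finX x0X] IH(4) by simp
  have oX: "\<forall>y\<in>insert x0 X. y < x" using x0x IH(6) by auto
  have sub: "insert x0 X \<subseteq> H" "x \<in> H" "R \<subseteq> H" using IH(1,2,3) x0H by auto
  show ?case
    by (intro exI[of _ "insert x0 X"] exI[of _ x] exI[of _ R] conjI) (use sub cX IH(5) oX IH(7) in auto)
qed

lemma rank_unique:
  fixes S :: "nat set"
  assumes "finite S" "i \<in> S" "i' \<in> S" "card {x\<in>S. x < i} = card {x\<in>S. x < i'}"
  shows "i = i'"
proof (rule ccontr)
  assume ne: "i \<noteq> i'"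
  have "card {x\<in>S. x < u} < card {x\<in>S. x < v}" if "u \<in> S" "u < v" for u v
    by (rule psubset_card_mono) (use assms(1) that in auto)
  note lt = this
  consider "i < i'" | "i' < i" using ne by linarith
  then show False
  proof cases
    case 1
    from lt[OF assms(2) 1] assms(4) show False by simp
  next
    case 2
    from lt[OF assms(3) 2] assms(4) show False by simp
  qed
qed

lemma ceil_helper:
  assumes d: "0 < d" shows "c \<le> d * real (nat \<lceil>c / d\<rceil>)"
proof -
  have "c / d \<le> real (nat \<lceil>c / d\<rceil>)" by (rule real_nat_ceiling_ge)
  then have "c \<le> real (nat \<lceil>c / d\<rceil>) * d" by (simp only: pos_divide_le_eq[OF d])
  then show ?thesis by (simp only: mult.commute)
qed

lemma disj_lt2:
  fixes A B :: "nat set"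
  assumes "\<And>y z. y \<in> A \<Longrightarrow> z \<in> B \<Longrightarrow> y < z"
  shows "A \<inter> B = {}"
proof (rule equals0I)
  fix y assume "y \<in> A \<inter> B"
  then have "y < y" using assms by blast
  then show False by simp
qed

lemma pair_lemma:
  fixes \<delta> :: real
  assumes d0: "0 < \<delta>" and d1: "\<delta> \<le> 1" and ab: "a < b" and bn: "b < n"
  shows "\<exists>N. \<forall>V W Y. finite Y \<and> okd \<delta> V W Y \<and> N \<le> card Y \<longrightarrow>
           (\<exists>H\<subseteq>Y. card H = K \<and> (\<forall>S\<subseteq>H. card S = n \<longrightarrow> goodp a b V W S))"
proof -
  define p where "p = a"
  define q where "q = b - a - 1"
  define r where "r = n - 1 - b"
  define m1 where "m1 = nat \<lceil>2 * real p / \<delta>\<rceil>"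
  define \<delta>1 where "\<delta>1 = \<delta> / 2^(m1 + 1)"
  define m2 where "m2 = nat \<lceil>2 * real q / \<delta>1\<rceil>"
  define \<delta>2 where "\<delta>2 = \<delta>1 / 2^(m2 + 1)"
  define m3 where "m3 = nat \<lceil>real r / \<delta>2\<rceil>"
  define K' where "K' = max K (m1 + 1 + (m2 + 1 + m3))"
  have d1pos: "0 < \<delta>1" unfolding \<delta>1_def using d0 by simp
  have d2pos: "0 < \<delta>2" unfolding \<delta>2_def using d1pos by simp
  have c1: "2 * real p \<le> \<delta> * real m1" unfolding m1_def by (rule ceil_helper[OF d0])
  have c2: "2 * real q \<le> \<delta>1 * real m2" unfolding m2_def by (rule ceil_helper[OF d1pos])
  have c3: "real r \<le> \<delta>2 * real m3" unfolding m3_def by (rule ceil_helper[OF d2pos])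
  have nsum: "n = p + 1 + q + 1 + r" unfolding p_def q_def r_def using ab bn by simp
  obtain N :: nat where N: "partn_lst {..<N} [K', K'] n" using ramsey_full[of "[K', K']" n] by blast
  show ?thesis
  proof (intro exI[of _ N] allI impI)
    fix V W Y
    assume asm: "finite Y \<and> okd \<delta> V W Y \<and> N \<le> card Y"
    then have finY: "finite Y" and okY: "okd \<delta> V W Y" and NY: "N \<le> card Y" by auto
    obtain Y0 where Y0: "Y0 \<subseteq> Y" "card Y0 = N" using NY obtain_subset_with_card_n by metis
    have finY0: "finite Y0" using Y0 finY finite_subset by blast
    obtain e where e: "bij_betw e {0..<N} Y0" using ex_bij_betw_nat_finite[OF finY0] Y0 by metis
    have einj: "inj_on e {..<N}" using e by (simp add: bij_betw_def lessThan_atLeast0)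
    have eimg: "e ` {..<N} = Y0" using e by (simp add: bij_betw_def lessThan_atLeast0)
    define col where "col T = (if goodp a b V W (e ` T) then 0 else 1::nat)" for T
    have colf: "col \<in> nsets {..<N} n \<rightarrow> {..<length [K',K']}" unfolding col_def by auto
    obtain i H0 where i: "i < length [K',K']" and H0: "H0 \<in> nsets {..<N} ([K',K'] ! i)"
      and hom: "col ` nsets H0 n \<subseteq> {i}"
      using partn_lstE[OF N colf refl] by metis
    have Ki: "[K',K'] ! i = K'" using i by (cases i) (auto simp: less_Suc_eq)
    have H0': "H0 \<subseteq> {..<N}" "finite H0" "card H0 = K'" using H0 Ki
      by (auto simp: nsets_def)
    define H where "H = e ` H0"
    have HY: "H \<subseteq> Y" unfolding H_def using H0'(1) eimg Y0(1) by blast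
    have einjH: "inj_on e H0" using einj H0'(1) inj_on_subset by blast
    have cardH: "card H = K'" unfolding H_def using einjH H0'(3) by (simp add: card_image)
    have finH: "finite H" unfolding H_def using H0'(2) by simp
    have key: "goodp a b V W S \<longleftrightarrow> i = 0" if SH: "S \<subseteq> H" and cS: "card S = n" for S
    proof -
      define T where "T = {x\<in>H0. e x \<in> S}"
      have eT: "e ` T = S" unfolding T_def using SH H_def by auto
      have "card T = n" using eT cS einjH unfolding T_def
        by (metis (no_types, lifting) card_image inj_on_subset mem_Collect_eq subsetI)
      then have "T \<in> nsets H0 n" unfolding nsets_def T_def using H0'(2) by auto
      then have "col T = i" using hom by blast
      then show ?thesis unfolding col_def using eT by (auto split: if_splits)
    qed
    have i01: "i = 0 \<or> i = 1" using i by auto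
    show "\<exists>H\<subseteq>Y. card H = K \<and> (\<forall>S\<subseteq>H. card S = n \<longrightarrow> goodp a b V W S)"
    proof (cases "i = 0")
      case True
      have "K \<le> card H" using cardH unfolding K'_def by simp
      then obtain H' where H': "H' \<subseteq> H" "card H' = K" using obtain_subset_with_card_n by metis
      show ?thesis using H' HY key True by (intro exI[of _ H']) auto
    next
      case False
      have bad: "\<not> goodp a b V W S" if "S \<subseteq> H" "card S = n" for S using key[OF that] False by simp
      have okH: "okd \<delta> V W H" using okd_mono[OF HY okY] .
      have sz1: "m1 + 1 + (m2 + 1 + m3) \<le> card H" using cardH unfolding K'_def by simp
      obtain X xi R1 where s1: "X \<subseteq> H" "xi \<in> H" "R1 \<subseteq> H" "card X = m1" "card R1 = m2 + 1 + m3"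
        "\<forall>y\<in>X. y < xi" "\<forall>y\<in>R1. xi < y" using split_lemma[OF finH sz1]
        by (elim exE conjE) (rule that, assumption+)
      have finR1: "finite R1" using s1(3) finH finite_subset by blast
      have sz2: "m2 + 1 + m3 \<le> card R1" using s1(5) by simp
      obtain Yb xk Z where s2: "Yb \<subseteq> R1" "xk \<in> R1" "Z \<subseteq> R1" "card Yb = m2" "card Z = m3"
        "\<forall>y\<in>Yb. y < xk" "\<forall>y\<in>Z. xk < y" using split_lemma[OF finR1 sz2]
        by (elim exE conjE) (rule that, assumption+)
      have finX: "finite X" using s1(1) finH finite_subset by blast
      have finYb: "finite Yb" using s2(1) finR1 finite_subset by blast
      have finZ: "finite Z" using s2(3) finR1 finite_subset by blast
      have xik: "xi < xk" "xk \<in> H" using s1 s2 by auto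
      have Vfin: "finite (V xi xk)" "V xi xk \<noteq> {}" using okdV[OF okH s1(2) xik(2) xik(1)] by auto
      have hyp: "\<forall>x\<in>X. \<forall>y\<in>Yb. \<forall>z\<in>Z. W x xi y xk z \<subseteq> V xi xk \<and> \<delta> * real (card (V xi xk)) \<le> real (card (W x xi y xk z))"
      proof (intro ballI)
        fix x y z assume xyz: "x \<in> X" "y \<in> Yb" "z \<in> Z"
        have m: "x \<in> H" "y \<in> H" "z \<in> H" using xyz s1 s2 by auto
        have o: "x < xi" "xi < y" "y < xk" "xk < z" using xyz s1 s2 by auto
        show "W x xi y xk z \<subseteq> V xi xk \<and> \<delta> * real (card (V xi xk)) \<le> real (card (W x xi y xk z))"
          by (rule okdD[OF okH m(1) s1(2) m(2) xik(2) m(3) o])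
      qed
      have "\<exists>w\<in>V xi xk. \<exists>A\<subseteq>X. \<exists>B\<subseteq>Yb. \<exists>C\<subseteq>Z. card A = p \<and> card B = q \<and> card C = r \<and>
           (\<forall>x\<in>A. \<forall>y\<in>B. \<forall>z\<in>C. w \<in> W x xi y xk z)"
        by (rule box_lemma[OF Vfin finX finYb finZ hyp d0 d1])
          (use c1 c2 c3 s1(4) s2(4,5) in \<open>simp_all add: \<delta>1_def \<delta>2_def\<close>)
      then obtain w A B C where w: "w \<in> V xi xk" and ABC: "A \<subseteq> X" "B \<subseteq> Yb" "C \<subseteq> Z"
        "card A = p" "card B = q" "card C = r" and wW: "\<forall>x\<in>A. \<forall>y\<in>B. \<forall>z\<in>C. w \<in> W x xi y xk z"
        by (elim bexE exE conjE) (rule that, assumption+)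
      define S where "S = A \<union> {xi} \<union> B \<union> {xk} \<union> C"
      have oA: "\<forall>y\<in>A. y < xi" using ABC s1 by auto
      have oB: "\<forall>y\<in>B. xi < y \<and> y < xk" using ABC s1 s2 by auto
      have oC: "\<forall>y\<in>C. xk < y" using ABC s2 by auto
      have finA: "finite A" "finite B" "finite C" using ABC finX finYb finZ finite_subset by auto
      have SH: "S \<subseteq> H" unfolding S_def using ABC s1 s2 xik by auto
      have finS: "finite S" using SH finH finite_subset by blast
      have oA': "y < xi" if "y \<in> A" for y using oA that by blast
      have oB1: "xi < y" if "y \<in> B" for y using oB that by blast
      have oB2: "y < xk" if "y \<in> B" for y using oB that by blast
      have oC': "xk < y" if "y \<in> C" for y using oC that by blast
      have xiA: "xi \<notin> A" using oA'[of xi] by auto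
      have u1: "y \<le> xi" if "y \<in> A \<union> {xi}" for y
        using that oA'[of y] by (cases "y \<in> A") auto
      have u2: "y < xk" if "y \<in> A \<union> {xi} \<union> B" for y
      proof (cases "y \<in> B")
        case True then show ?thesis using oB2 by simp
      next
        case False then have "y \<in> A \<union> {xi}" using that by simp
        then show ?thesis using u1[of y] xik(1) by simp
      qed
      have u3: "y \<le> xk" if "y \<in> A \<union> {xi} \<union> B \<union> {xk}" for y
        using that u2[of y] by (cases "y = xk") auto
      have cardS: "card S = n"
      proof -
        have e1: "card (A \<union> {xi}) = card A + card {xi}"
          by (rule card_Un_disjoint) (use finA xiA in simp_all)
        have e2: "card (A \<union> {xi} \<union> B) = card (A \<union> {xi}) + card B"
        proof (rule card_Un_disjoint)
          show "(A \<union> {xi}) \<inter> B = {}"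
            by (rule disj_lt2) (use u1 oB1 in \<open>fastforce intro: le_less_trans\<close>)
        qed (use finA in simp_all)
        have e3: "card (A \<union> {xi} \<union> B \<union> {xk}) = card (A \<union> {xi} \<union> B) + card {xk}"
        proof (rule card_Un_disjoint)
          show "(A \<union> {xi} \<union> B) \<inter> {xk} = {}"
            by (rule disj_lt2) (use u2 in simp)
        qed (use finA in simp_all)
        have e4: "card (A \<union> {xi} \<union> B \<union> {xk} \<union> C) = card (A \<union> {xi} \<union> B \<union> {xk}) + card C"
        proof (rule card_Un_disjoint)
          show "(A \<union> {xi} \<union> B \<union> {xk}) \<inter> C = {}"
            by (rule disj_lt2) (use u3 oC' in \<open>fastforce intro: le_less_trans\<close>)
        qed (use finA in simp_all)
        show ?thesis using e1 e2 e3 e4 ABC nsum unfolding S_def by simp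
      qed
      have lt_xi: "{x\<in>S. x < xi} = A"
      proof (rule set_eqI)
        fix x show "x \<in> {x\<in>S. x < xi} \<longleftrightarrow> x \<in> A"
          using oA'[of x] oB1[of x] oC'[of x] xik(1) unfolding S_def by auto
      qed
      have lt_xk: "{x\<in>S. x < xk} = A \<union> {xi} \<union> B"
      proof (rule set_eqI)
        fix x show "x \<in> {x\<in>S. x < xk} \<longleftrightarrow> x \<in> A \<union> {xi} \<union> B"
          using u2[of x] oC'[of x] xik(1) unfolding S_def by auto
      qed
      have cxi: "card {x\<in>S. x < xi} = a" using lt_xi ABC p_def by simp
      have cxk: "card {x\<in>S. x < xk} = b"
      proof -
        have e1: "card (A \<union> {xi}) = card A + card {xi}"
          by (rule card_Un_disjoint) (use finA xiA in simp_all)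
        have e2: "card (A \<union> {xi} \<union> B) = card (A \<union> {xi}) + card B"
        proof (rule card_Un_disjoint)
          show "(A \<union> {xi}) \<inter> B = {}"
            by (rule disj_lt2) (use u1 oB1 in \<open>fastforce intro: le_less_trans\<close>)
        qed (use finA in simp_all)
        have "card (A \<union> {xi} \<union> B) = card A + card {xi} + card B" using e1 e2 by simp
        then show ?thesis using lt_xk ABC p_def q_def ab by simp
      qed
      have xiS: "xi \<in> S" and xkS: "xk \<in> S" unfolding S_def by auto
      have "goodp a b V W S"
        unfolding goodp_def
      proof (intro ballI impI)
        fix i' k' assume iS: "i' \<in> S" "k' \<in> S" and c: "i' < k' \<and> card {x\<in>S. x < i'} = a \<and> card {x\<in>S. x < k'} = b"
        have ii: "i' = xi" using rank_unique[OF finS iS(1) xiS] c cxi by simp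
        have kk: "k' = xk" using rank_unique[OF finS iS(2) xkS] c cxk by simp
        show "\<exists>w\<in>V i' k'. \<forall>j\<in>S. \<forall>j'\<in>S. \<forall>j''\<in>S. j < i' \<and> i' < j' \<and> j' < k' \<and> k' < j'' \<longrightarrow> w \<in> W j i' j' k' j''"
          unfolding ii kk
        proof (intro bexI[OF _ w] ballI impI)
          fix j j' j'' assume jS: "j \<in> S" "j' \<in> S" "j'' \<in> S" and o: "j < xi \<and> xi < j' \<and> j' < xk \<and> xk < j''"
          have "j \<in> A" using jS(1) o oB oC xik(1) unfolding S_def by auto
          moreover have "j' \<in> B" using jS(2) o oA oC unfolding S_def by auto
          moreover have "j'' \<in> C" using jS(3) o oA oB xik(1) unfolding S_def by auto
          ultimately show "w \<in> W j xi j' xk j''" using wW by blast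
        qed
      qed
      then show ?thesis using bad[OF SH cardS] by simp
    qed
  qed
qed

lemma combine:
  fixes \<delta> :: real and P :: "(nat \<times> nat) set"
  assumes "finite P"
    and hyp: "\<forall>ab\<in>P. \<forall>K. \<exists>N. \<forall>V W Y. finite Y \<and> okd \<delta> V W Y \<and> N \<le> card Y \<longrightarrow>
           (\<exists>H\<subseteq>Y. card H = K \<and> (\<forall>S\<subseteq>H. card S = n \<longrightarrow> goodp (fst ab) (snd ab) V W S))"
  shows "\<forall>K. \<exists>N. \<forall>V W Y. finite Y \<and> okd \<delta> V W Y \<and> N \<le> card Y \<longrightarrow>
           (\<exists>H\<subseteq>Y. card H = K \<and> (\<forall>S\<subseteq>H. card S = n \<longrightarrow> (\<forall>ab\<in>P. goodp (fst ab) (snd ab) V W S)))"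
  using assms
proof (induction P rule: finite_induct)
  case empty
  show ?case
  proof (intro allI)
    fix K
    show "\<exists>N. \<forall>V W Y. finite Y \<and> okd \<delta> V W Y \<and> N \<le> card Y \<longrightarrow>
           (\<exists>H\<subseteq>Y. card H = K \<and> (\<forall>S\<subseteq>H. card S = n \<longrightarrow> (\<forall>ab\<in>{}. goodp (fst ab) (snd ab) V W S)))"
    proof (intro exI[of _ K] allI impI)
      fix V W Y
      assume "finite Y \<and> okd \<delta> V W Y \<and> K \<le> card Y"
      then obtain H where "H \<subseteq> Y" "card H = K" using obtain_subset_with_card_n by metis
      then show "\<exists>H\<subseteq>Y. card H = K \<and> (\<forall>S\<subseteq>H. card S = n \<longrightarrow> (\<forall>ab\<in>{}. goodp (fst ab) (snd ab) V W S))"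
        by (intro exI[of _ H]) simp
    qed
  qed
next
  case (insert ab P)
  note pr = insert.prems[unfolded ball_simps(7)]
  note hab = conjunct1[OF pr] and hP = conjunct2[OF pr]
  note IH = insert.IH[OF hP]
  show ?case
  proof (intro allI)
    fix K
    from spec[OF hab, of K] obtain Nab where Nab: "\<forall>V W Y. finite Y \<and> okd \<delta> V W Y \<and> Nab \<le> card Y \<longrightarrow>
           (\<exists>H\<subseteq>Y. card H = K \<and> (\<forall>S\<subseteq>H. card S = n \<longrightarrow> goodp (fst ab) (snd ab) V W S))" ..
    from spec[OF IH, of Nab] obtain N where N: "\<forall>V W Y. finite Y \<and> okd \<delta> V W Y \<and> N \<le> card Y \<longrightarrow>
           (\<exists>H\<subseteq>Y. card H = Nab \<and> (\<forall>S\<subseteq>H. card S = n \<longrightarrow> (\<forall>ab\<in>P. goodp (fst ab) (snd ab) V W S)))" ..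
    show "\<exists>N. \<forall>V W Y. finite Y \<and> okd \<delta> V W Y \<and> N \<le> card Y \<longrightarrow>
           (\<exists>H\<subseteq>Y. card H = K \<and> (\<forall>S\<subseteq>H. card S = n \<longrightarrow> (\<forall>ab\<in>insert ab P. goodp (fst ab) (snd ab) V W S)))"
    proof (intro exI[of _ N] allI impI)
      fix V W Y
      assume a: "finite Y \<and> okd \<delta> V W Y \<and> N \<le> card Y"
      have "\<exists>H\<subseteq>Y. card H = Nab \<and> (\<forall>S\<subseteq>H. card S = n \<longrightarrow> (\<forall>ab\<in>P. goodp (fst ab) (snd ab) V W S))"
        by (rule N[rule_format, OF a])
      then obtain H1 where H1: "H1 \<subseteq> Y" "card H1 = Nab" "\<forall>S\<subseteq>H1. card S = n \<longrightarrow> (\<forall>ab\<in>P. goodp (fst ab) (snd ab) V W S)"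
        by (elim exE conjE) (rule that, assumption+)
      have f1: "finite H1" using H1(1) a finite_subset by blast
      have o1: "okd \<delta> V W H1" using okd_mono[OF H1(1)] a by simp
      have "\<exists>H\<subseteq>H1. card H = K \<and> (\<forall>S\<subseteq>H. card S = n \<longrightarrow> goodp (fst ab) (snd ab) V W S)"
        by (rule Nab[rule_format, OF conjI[OF f1 conjI[OF o1 eq_imp_le[OF H1(2)[symmetric]]]]])
      then obtain H where H: "H \<subseteq> H1" "card H = K" "\<forall>S\<subseteq>H. card S = n \<longrightarrow> goodp (fst ab) (snd ab) V W S"
        by (elim exE conjE) (rule that, assumption+)
      have G: "\<forall>S\<subseteq>H. card S = n \<longrightarrow> (\<forall>ab'\<in>insert ab P. goodp (fst ab') (snd ab') V W S)"
      proof (intro allI impI)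
        fix S assume S: "S \<subseteq> H" "card S = n"
        have "S \<subseteq> H1" using S(1) H(1) by (rule order_trans)
        then have g1: "\<forall>ab\<in>P. goodp (fst ab) (snd ab) V W S"
          by (intro ballI) (rule H1(3)[rule_format, OF \<open>S \<subseteq> H1\<close> S(2)])
        have g2: "goodp (fst ab) (snd ab) V W S" by (rule H(3)[rule_format, OF S])
        show "\<forall>ab'\<in>insert ab P. goodp (fst ab') (snd ab') V W S"
        proof (rule ballI)
          fix x assume "x \<in> insert ab P"
          then show "goodp (fst x) (snd x) V W S" using g1 g2 by blast
        qed
      qed
      have HY: "H \<subseteq> Y" using H(1) H1(1) by (rule order_trans)
      show "\<exists>H\<subseteq>Y. card H = K \<and> (\<forall>S\<subseteq>H. card S = n \<longrightarrow> (\<forall>ab\<in>insert ab P. goodp (fst ab) (snd ab) V W S))"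
        using HY H(2) G by (intro exI[of _ H]) simp
    qed
  qed
qed

lemma goodpD:
  assumes "goodp a b V W S" "i \<in> S" "k \<in> S" "i < k" "card {x\<in>S. x < i} = a" "card {x\<in>S. x < k} = b"
  shows "\<exists>w\<in>V i k. \<forall>j\<in>S. \<forall>j'\<in>S. \<forall>j''\<in>S. j < i \<and> i < j' \<and> j' < k \<and> k < j'' \<longrightarrow> w \<in> W j i j' k j''"
  using assms unfolding goodp_def by simp

theorem lemma4p2:
  fixes \<delta> :: real and n :: nat
  assumes "\<delta> > 0"
  shows "\<exists>N::nat. \<forall>V E (W :: nat \<Rightarrow> nat \<Rightarrow> nat \<Rightarrow> nat \<Rightarrow> nat \<Rightarrow> nat set).
     partitioned_hypergraph N V E \<longrightarrow>
     (\<forall>j i j' k j''. 1 \<le> j \<and> j < i \<and> i < j' \<and> j' < k \<and> k < j'' \<and> j'' \<le> N \<longrightarrow>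
        W j i j' k j'' \<subseteq> V i k \<and> real (card (W j i j' k j'')) \<ge> \<delta> * real (card (V i k))) \<longrightarrow>
     (\<exists>I w. I \<subseteq> {1..N} \<and> card I = n \<and>
        (\<forall>i\<in>I. \<forall>k\<in>I. i < k \<longrightarrow> w i k \<in> V i k) \<and>
        (\<forall>j\<in>I. \<forall>i\<in>I. \<forall>j'\<in>I. \<forall>k\<in>I. \<forall>j''\<in>I.
           j < i \<and> i < j' \<and> j' < k \<and> k < j'' \<longrightarrow> w i k \<in> W j i j' k j''))"
proof -
  define \<delta>0 where "\<delta>0 = min \<delta> 1"
  have d0: "0 < \<delta>0" "\<delta>0 \<le> 1" "\<delta>0 \<le> \<delta>" using assms unfolding \<delta>0_def by auto
  define P where "P = {ab :: nat \<times> nat. fst ab < snd ab \<and> snd ab < n}"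
  have finP: "finite P" unfolding P_def
    by (rule finite_subset[of _ "{..<n} \<times> {..<n}"]) auto
  have hypP: "\<forall>ab\<in>P. \<forall>K. \<exists>N. \<forall>V W Y. finite Y \<and> okd \<delta>0 V W Y \<and> N \<le> card Y \<longrightarrow>
           (\<exists>H\<subseteq>Y. card H = K \<and> (\<forall>S\<subseteq>H. card S = n \<longrightarrow> goodp (fst ab) (snd ab) V W S))"
  proof (intro ballI allI)
    fix ab K assume "ab \<in> P"
    then have "fst ab < snd ab" "snd ab < n" unfolding P_def by auto
    then show "\<exists>N. \<forall>V W Y. finite Y \<and> okd \<delta>0 V W Y \<and> N \<le> card Y \<longrightarrow>
           (\<exists>H\<subseteq>Y. card H = K \<and> (\<forall>S\<subseteq>H. card S = n \<longrightarrow> goodp (fst ab) (snd ab) V W S))"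
      by (rule pair_lemma[OF d0(1,2)])
  qed
  obtain N where N: "\<forall>V W Y. finite Y \<and> okd \<delta>0 V W Y \<and> N \<le> card Y \<longrightarrow>
           (\<exists>H\<subseteq>Y. card H = n \<and> (\<forall>S\<subseteq>H. card S = n \<longrightarrow> (\<forall>ab\<in>P. goodp (fst ab) (snd ab) V W S)))"
    using spec[OF combine[OF finP hypP], of n] ..
  show ?thesis
  proof (intro exI[of _ N] allI impI)
    fix V E and W :: "nat \<Rightarrow> nat \<Rightarrow> nat \<Rightarrow> nat \<Rightarrow> nat \<Rightarrow> nat set"
    assume ph: "partitioned_hypergraph N V E"
      and Wh: "\<forall>j i j' k j''. 1 \<le> j \<and> j < i \<and> i < j' \<and> j' < k \<and> k < j'' \<and> j'' \<le> N \<longrightarrow>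
        W j i j' k j'' \<subseteq> V i k \<and> real (card (W j i j' k j'')) \<ge> \<delta> * real (card (V i k))"
    have ok: "okd \<delta>0 V W {1..N}"
      unfolding okd_def
    proof (intro conjI ballI impI)
      fix i k assume ik: "i \<in> {1..N}" "k \<in> {1..N}" "i < k"
      note phV = conjunct1[OF ph[unfolded partitioned_hypergraph_def], rule_format]
      have "1 \<le> i \<and> i < k \<and> k \<le> N" using ik by simp
      then show "finite (V i k)" "V i k \<noteq> {}" using phV by blast+
    next
      fix j i j' k j'' assume "j \<in> {1..N}" "i \<in> {1..N}" "j' \<in> {1..N}" "k \<in> {1..N}" "j'' \<in> {1..N}"
        and o: "j < i \<and> i < j' \<and> j' < k \<and> k < j''"
      then have "1 \<le> j \<and> j < i \<and> i < j' \<and> j' < k \<and> k < j'' \<and> j'' \<le> N" by simp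
      then have w: "W j i j' k j'' \<subseteq> V i k \<and> real (card (W j i j' k j'')) \<ge> \<delta> * real (card (V i k))"
        by (rule Wh[rule_format])
      have "\<delta>0 * real (card (V i k)) \<le> \<delta> * real (card (V i k))" using d0 by (simp add: mult_right_mono)
      then show "\<delta>0 * real (card (V i k)) \<le> real (card (W j i j' k j''))"
        using w by linarith
      show "W j i j' k j'' \<subseteq> V i k" using w by simp
    qed
    have "\<exists>H\<subseteq>{1..N}. card H = n \<and> (\<forall>S\<subseteq>H. card S = n \<longrightarrow> (\<forall>ab\<in>P. goodp (fst ab) (snd ab) V W S))"
      by (rule N[rule_format, OF conjI[OF finite_atLeastAtMost conjI[OF ok]]]) simp
    then obtain H where H: "H \<subseteq> {1..N}" "card H = n" "\<forall>S\<subseteq>H. card S = n \<longrightarrow> (\<forall>ab\<in>P. goodp (fst ab) (snd ab) V W S)"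
      by (elim exE conjE) (rule that, assumption+)
    have finH: "finite H" using H(1) finite_subset by blast
    define Q where "Q i k = (\<lambda>w. w \<in> V i k \<and> (\<forall>j\<in>H. \<forall>j'\<in>H. \<forall>j''\<in>H. j < i \<and> i < j' \<and> j' < k \<and> k < j'' \<longrightarrow> w \<in> W j i j' k j''))" for i k
    define w where "w i k = (SOME x. Q i k x)" for i k
    have ex: "\<exists>x. Q i k x" if ik: "i \<in> H" "k \<in> H" "i < k" for i k
    proof -
      define a where "a = card {x\<in>H. x < i}"
      define b where "b = card {x\<in>H. x < k}"
      have "a < b" unfolding a_def b_def
        by (rule psubset_card_mono) (use finH ik in auto)
      moreover have "b < n" unfolding b_def H(2)[symmetric]
        by (rule psubset_card_mono) (use finH ik in auto)
      ultimately have "(a,b) \<in> P" unfolding P_def by simp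
      then have "goodp a b V W H" using H(3)[rule_format, OF order_refl H(2)] by force
      from goodpD[OF this ik a_def[symmetric] b_def[symmetric]] show ?thesis unfolding Q_def by blast
    qed
    have wQ: "Q i k (w i k)" if "i \<in> H" "k \<in> H" "i < k" for i k
      unfolding w_def using someI_ex[OF ex[OF that]] .
    show "\<exists>I w. I \<subseteq> {1..N} \<and> card I = n \<and>
        (\<forall>i\<in>I. \<forall>k\<in>I. i < k \<longrightarrow> w i k \<in> V i k) \<and>
        (\<forall>j\<in>I. \<forall>i\<in>I. \<forall>j'\<in>I. \<forall>k\<in>I. \<forall>j''\<in>I.
           j < i \<and> i < j' \<and> j' < k \<and> k < j'' \<longrightarrow> w i k \<in> W j i j' k j'')"
    proof (intro exI[of _ H] exI[of _ w] conjI H(1) H(2) ballI impI)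
      fix i k assume "i \<in> H" "k \<in> H" "i < k"
      then show "w i k \<in> V i k" using wQ unfolding Q_def by simp
    next
      fix j i j' k j'' assume m: "j \<in> H" "i \<in> H" "j' \<in> H" "k \<in> H" "j'' \<in> H"
        and o: "j < i \<and> i < j' \<and> j' < k \<and> k < j''"
      then have "Q i k (w i k)" using wQ by auto
      then show "w i k \<in> W j i j' k j''" using m o unfolding Q_def by simp
    qed
  qed
qed

end
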